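(* Suppose $S\subseteq\mathbb{Z}^r$ is integrally-poised for polynomials of degree $n+1$. If $g$ is an integer-valued polynomial in $r$ variables of degree $n$, then there is an equality of subgroups of $\mathbb{Z}^r$: \[ \langle g(\mathbf{x})\mathbf{x}\mid \mathbf{x}\in\mathbb{Z}^r\rangle=\langle g(\mathbf{x})\mathbf{x}\mid \mathbf{x}\in S\rangle . \]
   Context: An integer-valued (numerical) polynomial is a polynomial $f\in\mathbb{Q}[x_1,\ldots,x_r]$ with $f(\mathbf{x})\in\mathbb{Z}$ for all $\mathbf{x}\in\mathbb{Z}^r$. A subset $S\subseteq\mathbb{Z}^r$ is integrally-poised for polynomials of degree $m$ if there exists a family of numerical polynomials $\{c_{\mathbf{a}}\}_{\mathbf{a}\in S}$ such that $f(\mathbf{x})=\sum_{\mathbf{a}\in S}c_{\mathbf{a}}(\mathbf{x})f(\mathbf{a})$ for all polynomials $f$ of degree $m$ and all $\mathbf{x}\in\mathbb{Z}^r$. *)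

theory Defs
  imports Complex_Main
begin

text \<open>Points of Z^r are functions 'n \<Rightarrow> int for a finite index type 'n (r = CARD('n)).
  Multi-indices are functions 'n \<Rightarrow> nat; the total degree of alpha is sum alpha UNIV.\<close>

definition monomials_upto :: "nat \<Rightarrow> ('n::finite \<Rightarrow> nat) set" where
  "monomials_upto m = {alpha. sum alpha UNIV \<le> m}"

definition rat_poly_deg :: "nat \<Rightarrow> (('n::finite \<Rightarrow> int) \<Rightarrow> rat) \<Rightarrow> bool" where
  "rat_poly_deg m f \<longleftrightarrow> (\<exists>c :: ('n \<Rightarrow> nat) \<Rightarrow> rat. \<forall>x.
      f x = (\<Sum>alpha\<in>monomials_upto m. c alpha * (\<Prod>i\<in>UNIV. of_int (x i) ^ alpha i)))"

definition numerical_poly_deg :: "nat \<Rightarrow> (('n::finite \<Rightarrow> int) \<Rightarrow> int) \<Rightarrow> bool" where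
  "numerical_poly_deg m g \<longleftrightarrow> rat_poly_deg m (\<lambda>x. of_int (g x))"

definition numerical_poly :: "(('n::finite \<Rightarrow> int) \<Rightarrow> int) \<Rightarrow> bool" where
  "numerical_poly g \<longleftrightarrow> (\<exists>m. numerical_poly_deg m g)"

definition integrally_poised :: "nat \<Rightarrow> ('n::finite \<Rightarrow> int) set \<Rightarrow> bool" where
  "integrally_poised m S \<longleftrightarrow> finite S \<and>
     (\<exists>c :: ('n \<Rightarrow> int) \<Rightarrow> ('n \<Rightarrow> int) \<Rightarrow> int.
        (\<forall>a\<in>S. numerical_poly (c a)) \<and>
        (\<forall>f. rat_poly_deg m f \<longrightarrow> (\<forall>x. f x = (\<Sum>a\<in>S. of_int (c a x) * f a))))"

definition zsubgroup :: "('n \<Rightarrow> int) set \<Rightarrow> bool" where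
  "zsubgroup H \<longleftrightarrow> (\<lambda>_. 0) \<in> H \<and> (\<forall>a\<in>H. \<forall>b\<in>H. (\<lambda>i. a i - b i) \<in> H)"

definition zgen :: "('n \<Rightarrow> int) set \<Rightarrow> ('n \<Rightarrow> int) set" where
  "zgen A = \<Inter>{H. zsubgroup H \<and> A \<subseteq> H}"

end

theory Submission
  imports Defs "HOL-Library.FuncSet"
begin

lemma finite_monomials_upto: "finite (monomials_upto m :: ('n::finite \<Rightarrow> nat) set)"
proof -
  have "monomials_upto m \<subseteq> PiE (UNIV::'n set) (\<lambda>_. {..m})"
  proof
    fix a :: "'n \<Rightarrow> nat" assume "a \<in> monomials_upto m"
    then have s: "sum a UNIV \<le> m" by (simp add: monomials_upto_def)
    have "a j \<le> m" for j using member_le_sum[of j UNIV a] s by simp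
    then show "a \<in> PiE UNIV (\<lambda>_. {..m})" by (auto simp: PiE_def extensional_def)
  qed
  moreover have "finite (PiE (UNIV::'n set) (\<lambda>_. {..m::nat}))" by (rule finite_PiE) auto
  ultimately show ?thesis by (rule finite_subset)
qed

lemma prod_upd:
  fixes f :: "'n::finite \<Rightarrow> rat"
  shows "(\<Prod>j\<in>UNIV. f j ^ (a(i := a i + 1)) j) = (\<Prod>j\<in>UNIV. f j ^ a j) * f i"
proof -
  have "(\<Prod>j\<in>UNIV. f j ^ (a(i := a i + 1)) j) = (\<Prod>j\<in>UNIV. f j ^ a j * (if j = i then f j else 1))"
    by (rule prod.cong) auto
  also have "\<dots> = (\<Prod>j\<in>UNIV. f j ^ a j) * (\<Prod>j\<in>UNIV. (if j = i then f j else 1))"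
    by (rule prod.distrib)
  also have "(\<Prod>j\<in>UNIV. (if j = i then f j else 1)) = f i" by (simp add: prod.delta)
  finally show ?thesis .
qed

lemma rat_poly_deg_mult_var:
  fixes f :: "('n::finite \<Rightarrow> int) \<Rightarrow> rat"
  assumes "rat_poly_deg m f"
  shows "rat_poly_deg (m + 1) (\<lambda>x. f x * of_int (x i))"
proof -
  from assms obtain c where c: "\<And>x. f x = (\<Sum>alpha\<in>monomials_upto m. c alpha * (\<Prod>j\<in>UNIV. of_int (x j) ^ alpha j))"
    unfolding rat_poly_deg_def by blast
  define c' where "c' = (\<lambda>b::'n \<Rightarrow> nat. if 0 < b i then c (b(i := b i - 1)) else 0)"
  let ?M = "monomials_upto m :: ('n \<Rightarrow> nat) set"
  let ?M1 = "monomials_upto (m+1) :: ('n \<Rightarrow> nat) set"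
  have img: "(\<lambda>a. a(i := a i + 1)) ` ?M = {b \<in> ?M1. 0 < b i}"
  proof (intro equalityI subsetI)
    fix b assume "b \<in> (\<lambda>a. a(i := a i + 1)) ` ?M"
    then obtain a where a: "a \<in> ?M" "b = a(i := a i + 1)" by blast
    have "sum b UNIV = sum a UNIV + 1"
      using a(2) by (simp add: sum.remove[of UNIV i])
    then show "b \<in> {b \<in> ?M1. 0 < b i}" using a by (simp add: monomials_upto_def)
  next
    fix b assume b: "b \<in> {b \<in> ?M1. 0 < b i}"
    define a where "a = b(i := b i - 1)"
    have "sum b UNIV = sum a UNIV + 1"
      using b by (simp add: a_def sum.remove[of UNIV i])
    then have "a \<in> ?M" using b by (simp add: monomials_upto_def)
    moreover have "b = a(i := a i + 1)" using b by (auto simp: a_def)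
    ultimately show "b \<in> (\<lambda>a. a(i := a i + 1)) ` ?M" by blast
  qed
  have inj: "inj_on (\<lambda>a. a(i := a i + 1)) ?M"
  proof (rule inj_onI, rule ext)
    fix a b :: "'n \<Rightarrow> nat" and j
    assume h: "a(i := a i + 1) = b(i := b i + 1)"
    from fun_cong[OF h, of j] fun_cong[OF h, of i] show "a j = b j" by (cases "j = i") auto
  qed
  show ?thesis unfolding rat_poly_deg_def
  proof (rule exI[of _ c'], rule allI)
    fix x :: "'n \<Rightarrow> int"
    let ?p = "\<lambda>b. \<Prod>j\<in>UNIV. (of_int (x j)::rat) ^ b j"
    have "(\<Sum>b\<in>?M1. c' b * ?p b) = (\<Sum>b\<in>?M1. if 0 < b i then c (b(i := b i - 1)) * ?p b else 0)"
      by (rule sum.cong) (auto simp: c'_def)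
    also have "\<dots> = (\<Sum>b\<in>{b \<in> ?M1. 0 < b i}. c (b(i := b i - 1)) * ?p b)"
      by (simp only: sum.inter_filter[OF finite_monomials_upto])
    also have "\<dots> = (\<Sum>a\<in>?M. c ((a(i := a i + 1))(i := (a(i := a i + 1)) i - 1)) * ?p (a(i := a i + 1)))"
      unfolding img[symmetric] by (rule sum.reindex[OF inj, unfolded comp_def])
    also have "\<dots> = (\<Sum>a\<in>?M. c a * ?p a * of_int (x i))"
    proof (rule sum.cong[OF refl])
      fix a assume "a \<in> ?M"
      have "(a(i := a i + 1))(i := (a(i := a i + 1)) i - 1) = a" by auto
      then show "c ((a(i := a i + 1))(i := (a(i := a i + 1)) i - 1)) * ?p (a(i := a i + 1)) = c a * ?p a * of_int (x i)"
        using prod_upd[of "\<lambda>j. of_int (x j) :: rat" a i] by (simp add: mult.assoc)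
    qed
    also have "\<dots> = f x * of_int (x i)" by (simp add: c sum_distrib_right)
    finally show "f x * of_int (x i) = (\<Sum>b\<in>?M1. c' b * ?p b)" by simp
  qed
qed

lemma zsubD:
  assumes "zsubgroup H" "a \<in> H" "b \<in> H"
  shows "(\<lambda>i. a i - b i) \<in> H"
  using assms unfolding zsubgroup_def by blast

lemma zsub0: "zsubgroup H \<Longrightarrow> (\<lambda>_. 0) \<in> H"
  unfolding zsubgroup_def by blast

lemma zgen_sub: "zsubgroup (zgen A)"
proof -
  have "(\<lambda>_. 0) \<in> zgen A" unfolding zgen_def using zsub0 by auto
  moreover have "(\<lambda>i. a i - b i) \<in> zgen A" if "a \<in> zgen A" "b \<in> zgen A" for a b
  proof -
    have "(\<lambda>i. a i - b i) \<in> H" if "zsubgroup H" "A \<subseteq> H" for H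
    proof -
      have "a \<in> H" "b \<in> H" using \<open>a \<in> zgen A\<close> \<open>b \<in> zgen A\<close> that unfolding zgen_def by auto
      then show ?thesis using zsubD that(1) by blast
    qed
    then show ?thesis unfolding zgen_def by blast
  qed
  ultimately show ?thesis unfolding zsubgroup_def by blast
qed

lemma zgen_least: "zsubgroup H \<Longrightarrow> A \<subseteq> H \<Longrightarrow> zgen A \<subseteq> H"
  unfolding zgen_def by (rule Inter_lower) simp

lemma zgen_base: "A \<subseteq> zgen A"
  unfolding zgen_def by blast

lemma zsub_neg: "zsubgroup H \<Longrightarrow> v \<in> H \<Longrightarrow> (\<lambda>i. - v i) \<in> H"
  using zsubD[of H "\<lambda>_. 0" v] zsub0[of H] by simp

lemma zsub_add: "zsubgroup H \<Longrightarrow> v \<in> H \<Longrightarrow> w \<in> H \<Longrightarrow> (\<lambda>i. v i + w i) \<in> H"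
  using zsubD[of H v "\<lambda>i. - w i"] zsub_neg[of H w] by simp

lemma zsub_nat: "zsubgroup H \<Longrightarrow> v \<in> H \<Longrightarrow> (\<lambda>i. int k * v i) \<in> H"
proof (induction k)
  case 0 then show ?case by (simp add: zsubgroup_def)
next
  case (Suc k)
  have "(\<lambda>i. int k * v i + v i) \<in> H" using Suc zsub_add by blast
  then show ?case by (simp add: algebra_simps)
qed

lemma zsub_smult: "zsubgroup H \<Longrightarrow> v \<in> H \<Longrightarrow> (\<lambda>i. k * v i) \<in> H"
proof (cases "k \<ge> 0")
  case True
  assume "zsubgroup H" "v \<in> H"
  then have "(\<lambda>i. int (nat k) * v i) \<in> H" by (rule zsub_nat)
  then show ?thesis using True by simp
next
  case False
  assume h: "zsubgroup H" "v \<in> H"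
  then have "(\<lambda>i. int (nat (-k)) * v i) \<in> H" by (rule zsub_nat)
  then have "(\<lambda>i. - (int (nat (-k)) * v i)) \<in> H" using h zsub_neg by blast
  then show ?thesis using False by simp
qed

lemma zsub_sum:
  assumes "zsubgroup H" "finite S" "\<And>a. a \<in> S \<Longrightarrow> v a \<in> H"
  shows "(\<lambda>i. \<Sum>a\<in>S. k a * v a i) \<in> H"
  using assms(2,3)
proof (induction S rule: finite_induct)
  case empty then show ?case using assms(1) by (simp add: zsubgroup_def)
next
  case (insert a F)
  have "(\<lambda>i. k a * v a i) \<in> H" using insert zsub_smult assms(1) by blast
  moreover have "(\<lambda>i. \<Sum>a\<in>F. k a * v a i) \<in> H" using insert by blast
  ultimately have "(\<lambda>i. k a * v a i + (\<Sum>a\<in>F. k a * v a i)) \<in> H" using zsub_add assms(1) by blast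
  then show ?case using insert by simp
qed

theorem proposition3p4:
  fixes S :: "('n::finite \<Rightarrow> int) set" and g :: "('n \<Rightarrow> int) \<Rightarrow> int" and n :: nat
  assumes "integrally_poised (n + 1) S"
    and "numerical_poly_deg n g"
  shows "zgen ((\<lambda>x. (\<lambda>i. g x * x i)) ` UNIV) = zgen ((\<lambda>x. (\<lambda>i. g x * x i)) ` S)"
proof -
  have fin: "finite S" using assms(1) unfolding integrally_poised_def by simp
  from assms(1) obtain c where
    c0: "\<forall>f. rat_poly_deg (n+1) f \<longrightarrow> (\<forall>x. f x = (\<Sum>a\<in>S. of_int (c a x) * f a))"
    unfolding integrally_poised_def by meson
  have c: "\<And>f. rat_poly_deg (n+1) f \<Longrightarrow> (\<forall>x. f x = (\<Sum>a\<in>S. of_int (c a x) * f a))"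
    using c0 by simp
  let ?H = "zgen ((\<lambda>x. (\<lambda>i. g x * x i)) ` S)"
  have key: "(\<lambda>i. g x * x i) \<in> ?H" for x
  proof -
    have "g x * x i = (\<Sum>a\<in>S. c a x * (g a * a i))" for i
    proof -
      have "rat_poly_deg (n+1) (\<lambda>y. of_int (g y) * of_int (y i))"
        using rat_poly_deg_mult_var[of n "\<lambda>y. of_int (g y)" i] assms(2)
        unfolding numerical_poly_deg_def by simp
      from c[OF this, rule_format, of x] have "(of_int (g x) * of_int (x i) :: rat) = (\<Sum>a\<in>S. of_int (c a x) * (of_int (g a) * of_int (a i)))"
        by simp
      then have "(of_int (g x * x i) :: rat) = of_int (\<Sum>a\<in>S. c a x * (g a * a i))" by simp
      then show ?thesis using of_int_eq_iff by blast
    qed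
    then have eq: "(\<lambda>i. g x * x i) = (\<lambda>i. \<Sum>a\<in>S. c a x * g a * a i)"
      by (simp add: mult.assoc)
    have mem: "(\<lambda>i. g a * a i) \<in> ?H" if "a \<in> S" for a
      by (rule subsetD[OF zgen_base, OF imageI[OF that]])
    have "(\<lambda>i. \<Sum>a\<in>S. c a x * (\<lambda>a i. g a * a i) a i) \<in> ?H"
      by (rule zsub_sum[where v="\<lambda>a i. g a * a i" and k="\<lambda>a. c a x", OF zgen_sub fin mem])
    then show ?thesis unfolding eq by (simp add: mult.assoc)
  qed
  show ?thesis
  proof
    show "zgen ((\<lambda>x. (\<lambda>i. g x * x i)) ` UNIV) \<subseteq> ?H"
      by (rule zgen_least[OF zgen_sub], rule image_subsetI, rule key)
    show "?H \<subseteq> zgen ((\<lambda>x. (\<lambda>i. g x * x i)) ` UNIV)"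
      by (rule zgen_least[OF zgen_sub], rule image_subsetI, rule subsetD[OF zgen_base, OF imageI[OF UNIV_I]])
  qed
qed

end
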